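(* Let $k\in\mathbb{Z}$ with $|k|\ge 2$ and $z\in\mathbb{C}\setminus\{0\}$. Then $$|W_k'(z)| \le \frac{1}{|z|}\frac{(2|k|-2)\pi}{(2|k|-2)\pi-1} \le \frac{1}{|z|}\frac{2\pi}{2\pi-1} \le \frac{1.2}{|z|}.$$ Also, if $k=1$ and $\operatorname{Im}(z)\ge 0$, or if $k=-1$ and $\operatorname{Im}(z)<0$, then $$|W_k'(z)| \le \frac{1}{|z|}\frac{\pi}{\pi-1}\le\frac{1.5}{|z|}.$$
   Context: $W_k$ denotes the $k$-th branch of the Lambert $W$ function (inverse of $w\mapsto we^w$) in the standard convention of Corless, Gonnet, Hare, Jeffrey and Knuth (1996); branches with $|k|\ge2$ have a branch cut on $(-\infty,0)$, $W_{\pm1}$ have cuts on $(-\infty,0)$ and, on one side, $(-1/e,0)$; on a branch cut the value is defined by continuity from the upper half plane. $W_k'$ denotes the derivative of the fixed branch $W_k$ (on a cut, the derivative of the branch continued from above, i.e. the directional derivative along the cut), and $W'(z)=\frac{1}{z}\frac{W(z)}{1+W(z)}$. *)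

theory Defs
  imports "HOL-Analysis.Analysis"
begin

text \<open>Branches of the Lambert W function (Corless--Gonnet--Hare--Jeffrey--Knuth convention,
values on branch cuts by continuity from the upper half plane).
Characterisation via the unwinding identity of Jeffrey--Hare--Corless:
  W_k(z) + Ln W_k(z) = Ln z + 2 pi i k   (Ln = principal log, Im Ln in (-pi, pi]),
which determines W_k(z) uniquely for z \<noteq> 0 except for z in [-1/e, 0) with k = 0
(two real solutions) and k = -1 (no solution; W_{-1} is real there).
These exceptional cases are the real branches: W_0 with W \<ge> -1 and W_{-1} with W \<le> -1.
The value at z = 0 for k \<noteq> 0 is irrelevant (undefined mathematically).\<close>

definition LambertW :: "int \<Rightarrow> complex \<Rightarrow> complex" where
  "LambertW k z =
     (if z = 0 then 0
      else if z \<in> complex_of_real ` {-exp(-1)..<0} \<and> k = 0 then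
        (THE w. w \<in> \<real> \<and> -1 \<le> Re w \<and> w * exp w = z)
      else if z \<in> complex_of_real ` {-exp(-1)..<0} \<and> k = -1 then
        (THE w. w \<in> \<real> \<and> Re w \<le> -1 \<and> w * exp w = z)
      else (THE w. w \<noteq> 0 \<and> w + Ln w = Ln z + 2 * pi * \<i> * of_int k))"

text \<open>D is the derivative W_k'(z) of the fixed branch W_k at z; on the real axis (where
the cuts lie) it is the derivative of the branch continued from above, i.e. the derivative
within the closed upper half plane.\<close>

definition has_LambertW_deriv :: "int \<Rightarrow> complex \<Rightarrow> complex \<Rightarrow> bool" where
  "has_LambertW_deriv k z D \<longleftrightarrow>
     (LambertW k has_field_derivative D) (at z within {w. Im z = 0 \<longrightarrow> 0 \<le> Im w})"

end

theory Submission
  imports Defs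
begin

definition Gs :: "complex \<Rightarrow> complex" where
  "Gs c = (THE w. w \<noteq> 0 \<and> w + Ln w = c)"

lemma sgn_cases: "(s::real) = 1 \<or> s = -1 \<Longrightarrow> s * s = 1"
  by auto

lemma sol_region:
  assumes "w \<noteq> 0" "w + Ln w = c" "s = 1 \<or> s = -1" "2 + pi < s * Im c"
  shows "2 < s * Im w"
proof -
  have "Im w = Im c - Im (Ln w)" using assms(2) by (metis add_diff_cancel_right' minus_complex.sel(2))
  moreover have "-pi < Im (Ln w)" "Im (Ln w) \<le> pi" using assms(1) mpi_less_Im_Ln Im_Ln_le_pi by auto
  ultimately show ?thesis using assms(3,4) by auto
qed

lemma convex_S: "convex {w::complex. 2 \<le> s * Im w}"
proof -
  have "{w::complex. 2 \<le> s * Im w} = {w. inner (Complex 0 s) w \<ge> 2}"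
    by (auto simp: inner_complex_def)
  then show ?thesis using convex_halfspace_ge by metis
qed

lemma Ln_lip:
  assumes "2 \<le> s * Im u" "2 \<le> s * Im v" "s = 1 \<or> s = -1"
  shows "cmod (Ln u - Ln v) \<le> 1/2 * cmod (u - v)"
proof (rule field_differentiable_bound[OF convex_S[of s], where f' = inverse])
  fix z assume z: "z \<in> {w::complex. 2 \<le> s * Im w}"
  then have "2 \<le> \<bar>Im z\<bar>" using assms(3) by auto
  then have n: "2 \<le> cmod z" using abs_Im_le_cmod by (meson order_trans)
  have "z \<notin> \<real>\<^sub>\<le>\<^sub>0" using \<open>2 \<le> \<bar>Im z\<bar>\<close> by (auto simp: complex_nonpos_Reals_iff)
  then show "(Ln has_field_derivative inverse z) (at z within {w. 2 \<le> s * Im w})"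
    using has_field_derivative_Ln has_field_derivative_at_within by blast
  have "inverse (cmod z) \<le> inverse 2" using n by (intro le_imp_inverse_le) auto
  then show "cmod (inverse z) \<le> 1/2" by (simp add: norm_inverse)
qed (use assms in auto)

lemma G_ex:
  assumes s: "s = 1 \<or> s = -1" and c: "2 + pi < s * Im c"
  shows "\<exists>!w. w \<noteq> 0 \<and> w + Ln w = c"
proof -
  let ?S = "{w::complex. 2 \<le> s * Im w}"
  have cl: "closed ?S" by (intro closed_Collect_le continuous_intros)
  have "complete ?S" using cl complete_eq_closed by blast
  moreover have "?S \<noteq> {}"
  proof -
    have "2 \<le> s * Im (\<i> * complex_of_real (2 * s))" using s by auto
    then show ?thesis by blast
  qed
  moreover have "(\<lambda>w. c - Ln w) ` ?S \<subseteq> ?S"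
  proof
    fix x assume "x \<in> (\<lambda>w. c - Ln w) ` ?S"
    then obtain w where w: "w \<in> ?S" "x = c - Ln w" by blast
    have "w \<noteq> 0" using w s by auto
    then have "-pi < Im (Ln w)" "Im (Ln w) \<le> pi" using mpi_less_Im_Ln Im_Ln_le_pi by auto
    then show "x \<in> ?S" using w s c by auto
  qed
  moreover have "\<And>x y. x \<in> ?S \<Longrightarrow> y \<in> ?S \<Longrightarrow> dist (c - Ln x) (c - Ln y) \<le> 1/2 * dist x y"
  proof -
    fix x y assume "x \<in> ?S" "y \<in> ?S"
    then have "cmod (Ln y - Ln x) \<le> 1/2 * cmod (y - x)" using Ln_lip s by auto
    then show "dist (c - Ln x) (c - Ln y) \<le> 1/2 * dist x y"
      by (simp add: dist_norm norm_minus_commute)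
  qed
  ultimately have "\<exists>!x\<in>?S. c - Ln x = x"
    by (intro Banach_fix[where c="1/2"]) auto
  then obtain w where w: "w \<in> ?S" "c - Ln w = w" and u: "\<And>x. x \<in> ?S \<Longrightarrow> c - Ln x = x \<Longrightarrow> x = w"
    by metis
  have w0: "w \<noteq> 0" using w s by auto
  show ?thesis
  proof (rule ex1I[of _ w])
    show "w \<noteq> 0 \<and> w + Ln w = c" using w0 w by (metis diff_add_cancel add.commute)
  next
    fix x assume x: "x \<noteq> 0 \<and> x + Ln x = c"
    then have "2 < s * Im x" using sol_region s c by blast
    then show "x = w" using u x by (metis add_diff_cancel_right' less_eq_real_def mem_Collect_eq)
  qed
qed

lemma G_props:
  assumes s: "s = 1 \<or> s = -1" and c: "2 + pi < s * Im c"
  shows "Gs c \<noteq> 0" "Gs c + Ln (Gs c) = c" "2 < s * Im (Gs c)"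
proof -
  have "Gs c \<noteq> 0 \<and> Gs c + Ln (Gs c) = c" unfolding Gs_def using theI'[OF G_ex[OF s c]] .
  then show "Gs c \<noteq> 0" "Gs c + Ln (Gs c) = c" by auto
  then show "2 < s * Im (Gs c)" using sol_region s c by blast
qed

lemma G_lip:
  assumes s: "s = 1 \<or> s = -1" and c1: "2 + pi < s * Im c1" and c2: "2 + pi < s * Im c2"
  shows "cmod (Gs c1 - Gs c2) \<le> 2 * cmod (c1 - c2)"
proof -
  note p1 = G_props[OF s c1] and p2 = G_props[OF s c2]
  have "Gs c1 - Gs c2 = (c1 - c2) - (Ln (Gs c1) - Ln (Gs c2))"
    using p1(2) p2(2) by (metis (no_types, lifting) add_diff_cancel_right' diff_diff_eq diff_diff_eq2 diff_add_eq)
  then have "cmod (Gs c1 - Gs c2) \<le> cmod (c1 - c2) + cmod (Ln (Gs c1) - Ln (Gs c2))"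
    by (metis norm_triangle_ineq4)
  also have "cmod (Ln (Gs c1) - Ln (Gs c2)) \<le> 1/2 * cmod (Gs c1 - Gs c2)"
    using Ln_lip[of s "Gs c1" "Gs c2"] p1(3) p2(3) s by auto
  finally show ?thesis by linarith
qed

lemma open_U: "open {c::complex. 2 + pi < s * Im c}"
  by (intro open_Collect_less continuous_intros)

lemma G_deriv:
  assumes s: "s = 1 \<or> s = -1" and c: "2 + pi < s * Im c"
  shows "(Gs has_field_derivative inverse (1 + inverse (Gs c))) (at c)"
proof (rule has_field_derivative_inverse_basic[where f="\<lambda>w. w + Ln w" and t="{c::complex. 2 + pi < s * Im c}"])
  note p = G_props[OF s c]
  have "Gs c \<notin> \<real>\<^sub>\<le>\<^sub>0" using p(3) s by (auto simp: complex_nonpos_Reals_iff)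
  then show "((\<lambda>w. w + Ln w) has_field_derivative 1 + inverse (Gs c)) (at (Gs c))"
    by (auto intro!: derivative_eq_intros has_field_derivative_Ln)
  show "1 + inverse (Gs c) \<noteq> 0"
  proof
    assume "1 + inverse (Gs c) = 0"
    then have "Gs c = -1" by (metis add.inverse_inverse add_eq_0_iff inverse_minus_eq inverse_1 inverse_inverse_eq)
    then show False using p(3) s by auto
  qed
  have "(2::real)-lipschitz_on {c::complex. 2 + pi < s * Im c} Gs"
    by (rule lipschitz_onI) (use G_lip[OF s] in \<open>auto simp: dist_norm\<close>)
  then have "continuous_on {c::complex. 2 + pi < s * Im c} Gs" by (rule lipschitz_on_continuous_on)
  then show "isCont Gs c" using continuous_on_eq_continuous_at[OF open_U] c by blast
  show "open {c::complex. 2 + pi < s * Im c}" by (rule open_U)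
  show "c \<in> {c. 2 + pi < s * Im c}" using c by simp
  show "\<And>z. z \<in> {c. 2 + pi < s * Im c} \<Longrightarrow> Gs z + Ln (Gs z) = z" using G_props s by auto
qed

lemma Ln_deriv_T:
  assumes z0: "z0 \<noteq> 0"
  shows "(Ln has_field_derivative inverse z0) (at z0 within {w. Im z0 = 0 \<longrightarrow> 0 \<le> Im w})"
proof (cases "z0 \<in> \<real>\<^sub>\<le>\<^sub>0")
  case False
  then show ?thesis using has_field_derivative_Ln has_field_derivative_at_within by blast
next
  case True
  then have re: "Re z0 < 0" and im: "Im z0 = 0" using z0 complex_eq_iff
    by (auto simp: complex_nonpos_Reals_iff)
  have nn: "- \<i> * z0 \<notin> \<real>\<^sub>\<le>\<^sub>0" using re by (auto simp: complex_nonpos_Reals_iff)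
  have "((\<lambda>w. Ln (- \<i> * w) + \<i> * of_real pi / 2) has_field_derivative inverse (- \<i> * z0) * (- \<i>)) (at z0)"
  proof -
    have l: "((\<lambda>w. - \<i> * w) has_field_derivative - \<i>) (at z0)"
      by (auto intro!: derivative_eq_intros)
    have "((\<lambda>w. Ln (- \<i> * w)) has_field_derivative inverse (- \<i> * z0) * (- \<i>)) (at z0)"
      by (rule DERIV_chain2[OF has_field_derivative_Ln[OF nn] l])
    from DERIV_add[OF this DERIV_const[of "\<i> * of_real pi / 2"]] show ?thesis by simp
  qed
  moreover have "inverse (- \<i> * z0) * (- \<i>) = inverse z0" using z0 by (simp add: field_simps)
  ultimately have d: "((\<lambda>w. Ln (- \<i> * w) + \<i> * of_real pi / 2) has_field_derivative inverse z0)
      (at z0 within {w. Im z0 = 0 \<longrightarrow> 0 \<le> Im w})"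
    using has_field_derivative_at_within by metis
  show ?thesis
  proof (rule has_field_derivative_transform_within[OF d, of "cmod z0"])
    show "0 < cmod z0" using z0 by simp
    show "z0 \<in> {w. Im z0 = 0 \<longrightarrow> 0 \<le> Im w}" using im by simp
    fix w assume w: "w \<in> {w. Im z0 = 0 \<longrightarrow> 0 \<le> Im w}" "dist w z0 < cmod z0"
    then have w0: "w \<noteq> 0" by auto
    then have "- \<i> * w \<noteq> 0" by simp
    from Ln_times_ii[OF this] have "Ln (\<i> * (- \<i> * w)) = Ln (- \<i> * w) + \<i> * of_real pi / 2"
      using w im by simp
    then show "Ln (- \<i> * w) + \<i> * of_real pi / 2 = Ln w" by simp
  qed
qed

lemma LW_eq:
  assumes "z \<noteq> 0" "k \<noteq> 0" "k = -1 \<Longrightarrow> Im z \<noteq> 0"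
  shows "LambertW k z = Gs (Ln z + 2 * pi * \<i> * of_int k)"
  using assms unfolding LambertW_def Gs_def by auto

lemma ratio_bound:
  fixes W :: complex
  assumes "R \<le> cmod W" "1 < R"
  shows "cmod (inverse (1 + inverse W)) \<le> R / (R - 1)"
proof -
  have W0: "W \<noteq> 0" using assms by auto
  have e: "inverse (1 + inverse W) = W / (W + 1)" using W0 by (simp add: field_simps)
  have t: "cmod W - 1 \<le> cmod (W + 1)" by (metis norm_diff_ineq norm_one)
  have p: "0 < cmod W - 1" using assms by linarith
  have "cmod (W / (W + 1)) = cmod W / cmod (W + 1)" by (simp add: norm_divide)
  also have "\<dots> \<le> cmod W / (cmod W - 1)" using t p by (intro divide_left_mono mult_pos_pos) auto
  also have "\<dots> \<le> R / (R - 1)" using assms p by (simp add: field_simps)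
  finally show ?thesis using e by simp
qed

lemma deriv_main:
  assumes z0: "z0 \<noteq> 0" and s: "s = 1 \<or> s = -1"
  and c: "2 + pi < s * Im (Ln z0 + 2 * pi * \<i> * of_int k)"
  and d: "0 < d"
  and eq: "\<And>z. z \<in> {w. Im z0 = 0 \<longrightarrow> 0 \<le> Im w} \<Longrightarrow> dist z z0 < d \<Longrightarrow>
              LambertW k z = Gs (Ln z + 2 * pi * \<i> * of_int k)"
  shows "has_LambertW_deriv k z0 (inverse (1 + inverse (Gs (Ln z0 + 2 * pi * \<i> * of_int k))) * inverse z0)"
  unfolding has_LambertW_deriv_def
proof -
  let ?T = "{w. Im z0 = 0 \<longrightarrow> 0 \<le> Im w}"
  have "((\<lambda>z. Ln z + 2 * pi * \<i> * of_int k) has_field_derivative inverse z0 + 0) (at z0 within ?T)"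
    by (rule DERIV_add[OF Ln_deriv_T[OF z0] DERIV_const])
  then have L: "((\<lambda>z. Ln z + 2 * pi * \<i> * of_int k) has_field_derivative inverse z0) (at z0 within ?T)"
    by simp
  have "(Gs \<circ> (\<lambda>z. Ln z + 2 * pi * \<i> * of_int k) has_field_derivative
       inverse (1 + inverse (Gs (Ln z0 + 2 * pi * \<i> * of_int k))) * inverse z0) (at z0 within ?T)"
    using DERIV_chain[OF G_deriv[OF s c] L] by simp
  then show "(LambertW k has_field_derivative
       inverse (1 + inverse (Gs (Ln z0 + 2 * pi * \<i> * of_int k))) * inverse z0) (at z0 within ?T)"
    by (rule has_field_derivative_transform_within[OF _ d]) (use eq in auto)
qed

lemma num1: "2*pi \<le> R \<Longrightarrow> R/(R-1) \<le> 2*pi/(2*pi-1)"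
  using pi_gt3 by (simp add: field_simps)

lemma num2: "2*pi/(2*pi-1) \<le> 1.2" "pi/(pi-1) \<le> 1.5"
  using pi_gt3 by (simp_all add: field_simps)

lemma norm_D: "cmod (inverse (1 + inverse W) * inverse z) = cmod (inverse (1 + inverse W)) * (1 / cmod z)"
  by (simp add: norm_mult norm_inverse divide_inverse)

lemma generic_case:
  assumes z: "z \<noteq> 0" and s: "s = 1 \<or> s = -1"
  and cond: "2 + pi < s * Im (Ln z + 2 * pi * \<i> * of_int k)"
  and d: "0 < d"
  and eq: "\<And>w. w \<in> {w. Im z = 0 \<longrightarrow> 0 \<le> Im w} \<Longrightarrow> dist w z < d \<Longrightarrow>
              LambertW k w = Gs (Ln w + 2 * pi * \<i> * of_int k)"
  and R1: "1 < R"
  and RW: "\<And>W. W \<noteq> 0 \<Longrightarrow> W + Ln W = Ln z + 2 * pi * \<i> * of_int k \<Longrightarrow> R \<le> cmod W"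
  shows "\<exists>D. has_LambertW_deriv k z D \<and> cmod D \<le> (1 / cmod z) * (R / (R - 1))"
proof -
  note p = G_props[OF s cond]
  let ?W = "Gs (Ln z + 2 * pi * \<i> * of_int k)"
  have "R \<le> cmod ?W" using RW p by blast
  then have b: "cmod (inverse (1 + inverse ?W)) \<le> R / (R - 1)" using ratio_bound R1 by blast
  have "cmod (inverse (1 + inverse ?W) * inverse z) \<le> (1 / cmod z) * (R / (R - 1))"
  proof -
    have "(1 / cmod z) * cmod (inverse (1 + inverse ?W)) \<le> (1 / cmod z) * (R / (R - 1))"
      by (rule mult_left_mono[OF b]) simp
    then show ?thesis unfolding norm_D by (simp only: mult.commute)
  qed
  then show ?thesis using deriv_main[OF z s cond d eq] by blast
qed

lemma ImW:
  assumes "W \<noteq> 0" "W + Ln W = Ln z + 2 * pi * \<i> * of_int k"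
  shows "Im W = Im (Ln z) + 2 * pi * k - Im (Ln W)"
proof -
  have "Im (W + Ln W) = Im (Ln z + 2 * pi * \<i> * of_int k)" using assms by simp
  then show ?thesis by simp
qed

lemma case_big:
  fixes k :: int
  assumes z: "z \<noteq> 0" and k: "\<bar>k\<bar> \<ge> 2"
  shows "\<exists>D. has_LambertW_deriv k z D \<and>
     cmod D \<le> (1 / cmod z) * ((2 * \<bar>k\<bar> - 2) * pi / ((2 * \<bar>k\<bar> - 2) * pi - 1))"
proof -
  have hz: "-pi < Im (Ln z)" "Im (Ln z) \<le> pi" using z mpi_less_Im_Ln Im_Ln_le_pi by auto
  have kk: "real_of_int \<bar>k\<bar> \<ge> 2" using k by linarith
  have "(2::real) \<le> 2 * \<bar>k\<bar> - 2" using kk by linarith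
  then have "2 * pi \<le> (2 * \<bar>k\<bar> - 2) * pi" by (intro mult_right_mono) auto
  then have R1: "1 < (2 * \<bar>k\<bar> - 2) * pi" using pi_gt3 by linarith
  have eq: "\<And>w. w \<in> {w. Im z = 0 \<longrightarrow> 0 \<le> Im w} \<Longrightarrow> dist w z < cmod z \<Longrightarrow>
              LambertW k w = Gs (Ln w + 2 * pi * \<i> * of_int k)"
    using k by (intro LW_eq) auto
  show ?thesis
  proof (cases "k \<ge> 2")
    case True
    have cond: "2 + pi < 1 * Im (Ln z + 2 * pi * \<i> * of_int k)"
    proof -
      have "real_of_int k \<ge> 2" using True by simp
      then have "2 * pi * 2 \<le> 2 * pi * k" by (intro mult_left_mono) auto
      moreover have "Im (Ln z + 2 * pi * \<i> * of_int k) = Im (Ln z) + 2 * pi * k" by simp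
      ultimately show ?thesis using hz pi_gt3 by linarith
    qed
    show ?thesis
    proof (rule generic_case[OF z _ cond _ eq R1])
      fix W assume W: "W \<noteq> 0" "W + Ln W = Ln z + 2 * pi * \<i> * of_int k"
      have "Im (Ln W) \<le> pi" using W Im_Ln_le_pi by auto
      then have "(2 * \<bar>k\<bar> - 2) * pi \<le> Im W" using ImW[OF W] hz True by (simp add: algebra_simps)
      then show "(2 * \<bar>k\<bar> - 2) * pi \<le> cmod W" using abs_Im_le_cmod[of W] by linarith
    qed (use z in auto)
  next
    case False
    then have kn: "k \<le> -2" using k by linarith
    have cond: "2 + pi < -1 * Im (Ln z + 2 * pi * \<i> * of_int k)"
    proof -
      have "real_of_int k \<le> -2" using kn by simp
      then have "2 * pi * k \<le> 2 * pi * (-2)" by (intro mult_left_mono) auto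
      moreover have "Im (Ln z + 2 * pi * \<i> * of_int k) = Im (Ln z) + 2 * pi * k" by simp
      ultimately show ?thesis using hz pi_gt3 by linarith
    qed
    show ?thesis
    proof (rule generic_case[OF z _ cond _ eq R1])
      fix W assume W: "W \<noteq> 0" "W + Ln W = Ln z + 2 * pi * \<i> * of_int k"
      have "-pi < Im (Ln W)" using W mpi_less_Im_Ln by auto
      then have "(2 * \<bar>k\<bar> - 2) * pi \<le> - Im W" using ImW[OF W] hz kn by (simp add: algebra_simps)
      then show "(2 * \<bar>k\<bar> - 2) * pi \<le> cmod W" using abs_Im_le_cmod[of W] by linarith
    qed (use z in auto)
  qed
qed

lemma case_one:
  fixes k :: int
  assumes z: "z \<noteq> 0" and k: "(k = 1 \<and> Im z \<ge> 0) \<or> (k = -1 \<and> Im z < 0)"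
  shows "\<exists>D. has_LambertW_deriv k z D \<and> cmod D \<le> (1 / cmod z) * (pi / (pi - 1))"
proof -
  have hz: "-pi < Im (Ln z)" "Im (Ln z) \<le> pi" using z mpi_less_Im_Ln Im_Ln_le_pi by auto
  have R1: "1 < pi" using pi_gt3 by linarith
  have im: "Im (Ln z + 2 * pi * \<i> * of_int k) = Im (Ln z) + 2 * pi * k" by simp
  show ?thesis
  proof (cases "k = 1 \<and> Im z \<ge> 0")
    case True
    then have k1: "k = 1" and iz: "0 \<le> Im z" by auto
    have lz: "0 \<le> Im (Ln z)" using Im_Ln_pos_le[OF z] iz by blast
    have cond: "2 + pi < 1 * Im (Ln z + 2 * pi * \<i> * of_int k)"
      using im lz k1 pi_gt3 by simp
    have eq: "\<And>w. w \<in> {w. Im z = 0 \<longrightarrow> 0 \<le> Im w} \<Longrightarrow> dist w z < cmod z \<Longrightarrow>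
              LambertW k w = Gs (Ln w + 2 * pi * \<i> * of_int k)"
      using k1 by (intro LW_eq) auto
    show ?thesis
    proof (rule generic_case[OF z _ cond _ eq R1])
      fix W assume W: "W \<noteq> 0" "W + Ln W = Ln z + 2 * pi * \<i> * of_int k"
      have "Im (Ln W) \<le> pi" using W Im_Ln_le_pi by auto
      then have "pi \<le> Im W" using ImW[OF W] lz k1 by simp
      then show "pi \<le> cmod W" using abs_Im_le_cmod[of W] by linarith
    qed (use z in auto)
  next
    case False
    then have k1: "k = -1" and iz: "Im z < 0" using k by auto
    have lz: "Im (Ln z) < 0"
    proof (rule ccontr)
      assume "\<not> Im (Ln z) < 0"
      then have "0 \<le> Im (Ln z) \<and> Im (Ln z) \<le> pi" using hz by auto
      then show False using Im_Ln_pos_le[OF z] iz by auto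
    qed
    have cond: "2 + pi < -1 * Im (Ln z + 2 * pi * \<i> * of_int k)"
      using im lz k1 pi_gt3 by simp
    have eq: "LambertW k w = Gs (Ln w + 2 * pi * \<i> * of_int k)"
      if "w \<in> {w. Im z = 0 \<longrightarrow> 0 \<le> Im w}" "dist w z < - Im z" for w
    proof -
      have "\<bar>Im (w - z)\<bar> \<le> cmod (w - z)" by (rule abs_Im_le_cmod)
      then have "Im w < 0" using that(2) by (simp add: dist_norm)
      then show ?thesis using k1 by (intro LW_eq) auto
    qed
    show ?thesis
    proof (rule generic_case[OF z _ cond _ eq R1])
      fix W assume W: "W \<noteq> 0" "W + Ln W = Ln z + 2 * pi * \<i> * of_int k"
      have "-pi < Im (Ln W)" using W mpi_less_Im_Ln by auto
      then have "pi \<le> - Im W" using ImW[OF W] lz k1 by simp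
      then show "pi \<le> cmod W" using abs_Im_le_cmod[of W] by linarith
    qed (use iz in auto)
  qed
qed

theorem theorem3:
  fixes k :: int and z :: complex
  assumes "z \<noteq> 0"
  shows "(\<bar>k\<bar> \<ge> 2 \<longrightarrow>
            (\<exists>D. has_LambertW_deriv k z D \<and>
               cmod D \<le> (1 / cmod z) * ((2 * \<bar>k\<bar> - 2) * pi / ((2 * \<bar>k\<bar> - 2) * pi - 1)) \<and>
               (1 / cmod z) * ((2 * \<bar>k\<bar> - 2) * pi / ((2 * \<bar>k\<bar> - 2) * pi - 1))
                 \<le> (1 / cmod z) * (2 * pi / (2 * pi - 1)) \<and>
               (1 / cmod z) * (2 * pi / (2 * pi - 1)) \<le> 1.2 / cmod z))
       \<and> ((k = 1 \<and> Im z \<ge> 0) \<or> (k = -1 \<and> Im z < 0) \<longrightarrow>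
            (\<exists>D. has_LambertW_deriv k z D \<and>
               cmod D \<le> (1 / cmod z) * (pi / (pi - 1)) \<and>
               (1 / cmod z) * (pi / (pi - 1)) \<le> 1.5 / cmod z))"
proof (intro conjI impI)
  assume k: "\<bar>k\<bar> \<ge> 2"
  have "(2::real) \<le> 2 * \<bar>k\<bar> - 2" using k by linarith
  then have "2 * pi \<le> (2 * \<bar>k\<bar> - 2) * pi" by (intro mult_right_mono) auto
  then have a: "(1 / cmod z) * ((2 * \<bar>k\<bar> - 2) * pi / ((2 * \<bar>k\<bar> - 2) * pi - 1))
                 \<le> (1 / cmod z) * (2 * pi / (2 * pi - 1))"
    by (intro mult_left_mono num1) auto
  have b: "(1 / cmod z) * (2 * pi / (2 * pi - 1)) \<le> (1 / cmod z) * 1.2"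
    by (intro mult_left_mono num2) auto
  show "\<exists>D. has_LambertW_deriv k z D \<and>
               cmod D \<le> (1 / cmod z) * ((2 * \<bar>k\<bar> - 2) * pi / ((2 * \<bar>k\<bar> - 2) * pi - 1)) \<and>
               (1 / cmod z) * ((2 * \<bar>k\<bar> - 2) * pi / ((2 * \<bar>k\<bar> - 2) * pi - 1))
                 \<le> (1 / cmod z) * (2 * pi / (2 * pi - 1)) \<and>
               (1 / cmod z) * (2 * pi / (2 * pi - 1)) \<le> 1.2 / cmod z"
    using case_big[OF assms k] a b by auto
next
  assume k: "(k = 1 \<and> Im z \<ge> 0) \<or> (k = -1 \<and> Im z < 0)"
  have b: "(1 / cmod z) * (pi / (pi - 1)) \<le> (1 / cmod z) * 1.5"
    by (intro mult_left_mono num2) auto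
  show "\<exists>D. has_LambertW_deriv k z D \<and>
               cmod D \<le> (1 / cmod z) * (pi / (pi - 1)) \<and>
               (1 / cmod z) * (pi / (pi - 1)) \<le> 1.5 / cmod z"
    using case_one[OF assms k] b by auto
qed

end
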